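(* Let $\mathbb{Z}$ be a finite-dimensional Euclidean space, $L>0$, $G:\mathbb{Z}\to\mathbb{Z}$ $\frac1L$-co-coercive, $\beta_k\in(0,1)$, $\eta_k=(1-\beta_k)/L$, and let $z^0\in\mathbb{Z}$, $\tilde z^k\in\mathbb{Z}$ arbitrary and $z^{k+1}=\beta_kz^0+(1-\beta_k)z^k-\eta_k\tilde z^k$ for $k\ge0$. Then for $k\ge0$, \[\frac1{2L}\|G(z^{k+1})\|^2-\frac{\beta_k}{1-\beta_k}\langle G(z^{k+1}),z^0-z^{k+1}\rangle\le\frac{1-2\beta_k}{2L}\|G(z^k)\|^2-\beta_k\langle G(z^k),z^0-z^k\rangle+\frac{\beta_k}L\langle G(z^k),G(z^k)-\tilde z^k\rangle+\frac1{2L}\|G(z^k)-\tilde z^k\|^2.\] In particular, if $\beta_k=1/(k+2)$, then for $k\ge0$, \[\mathcal{L}_{k+1}\le\mathcal{L}_k+\frac1{12L}\|G(z^k)\|^2+\frac{4(k+1)^2}{L}\|G(z^k)-\tilde z^k\|^2,\] where $\mathcal{L}_k:=\frac{k(k+1)}{2L}\|G(z^k)\|^2-(k+1)\langle G(z^k),z^0-z^k\rangle$.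
   Context: $G$ is $\frac1L$-co-coercive if $\langle G(x_1)-G(x_2),x_1-x_2\rangle\ge\frac1L\|G(x_1)-G(x_2)\|^2$ for all $x_1,x_2$. *)

theory Defs
  imports "HOL-Analysis.Analysis"
begin

definition cocoercive :: "real \<Rightarrow> ('a::real_inner \<Rightarrow> 'a) \<Rightarrow> bool" where
  "cocoercive L G \<longleftrightarrow>
     (\<forall>x1 x2. inner (G x1 - G x2) (x1 - x2) \<ge> (1 / L) * (norm (G x1 - G x2))\<^sup>2)"

definition lyap :: "real \<Rightarrow> ('a::real_inner \<Rightarrow> 'a) \<Rightarrow> (nat \<Rightarrow> 'a) \<Rightarrow> nat \<Rightarrow> real" where
  "lyap L G z k = real k * (real k + 1) / (2 * L) * (norm (G (z k)))\<^sup>2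
                  - (real k + 1) * inner (G (z k)) (z 0 - z k)"

end

theory Submission imports Defs begin
lemma alg2:
  fixes L N0 D I :: real and k :: nat
  assumes "L > 0" "0 \<le> N0 - 12*(real k+1)*I + 36*(real k+1)^2*D" "D \<ge> 0"
  shows "(real k + 1)/L * I + (real k+1)*(real k+2)/(2*L) * D \<le> 1/(12*L)*N0 + 4*(real k+1)^2/L*D"
proof -
  have "(real k + 1) * I + (real k+1)*(real k+2)/2 * D \<le> 1/12*N0 + 4*(real k+1)^2*D"
  proof -
    have "(real k + 1) * I \<le> 1/12*N0 + 3*(real k+1)^2*D"
    proof -
      have "12*((real k+1)*I) \<le> N0 + 36*(real k+1)^2*D" using assms(2) by (simp add: algebra_simps)
      then show ?thesis by linarith
    qed
    moreover have "(real k+1)*(real k+2)/2 * D \<le> (real k+1)^2*D"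
      using assms by (intro mult_right_mono) (auto simp: power2_eq_square field_simps)
    moreover have "4*(real k+1)^2*D = 3*(real k+1)^2*D + (real k+1)^2*D" by (simp add: algebra_simps)
    ultimately show ?thesis by linarith
  qed
  then have "((real k + 1) * I + (real k+1)*(real k+2)/2 * D) / L \<le> (1/12*N0 + 4*(real k+1)^2*D) / L"
    using assms by (intro divide_right_mono) auto
  moreover have "((real k + 1) * I + (real k+1)*(real k+2)/2 * D) / L = (real k + 1)/L * I + (real k+1)*(real k+2)/(2*L) * D"
    using assms by (simp add: field_simps)
  moreover have "(1/12*N0 + 4*(real k+1)^2*D) / L = 1/(12*L)*N0 + 4*(real k+1)^2/L*D"
    using assms by (simp add: field_simps)
  ultimately show ?thesis by simp
qed

lemma step:
  fixes G :: "'a::euclidean_space \<Rightarrow> 'a" and L b :: real and z0 z z' u :: 'a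
  assumes L: "L > 0" and coco: "cocoercive L G" and b: "0 < b" "b < 1"
    and it: "z' = b *\<^sub>R z0 + (1 - b) *\<^sub>R z - ((1 - b) / L) *\<^sub>R u"
  shows "1 / (2 * L) * (norm (G z'))\<^sup>2 - b / (1 - b) * inner (G z') (z0 - z')
     \<le> (1 - 2 * b) / (2 * L) * (norm (G z))\<^sup>2 - b * inner (G z) (z0 - z)
       + b / L * inner (G z) (G z - u) + 1 / (2 * L) * (norm (G z - u))\<^sup>2"
proof -
  define g' where "g' = G z'"
  define g where "g = G z"
  have c: "inner (g' - g) (z' - z) \<ge> (1/L) * (norm (g' - g))\<^sup>2"
    using coco unfolding cocoercive_def g'_def g_def by blast
  have d1: "z' - z = (b/(1-b)) *\<^sub>R (z0 - z') - (1/L) *\<^sub>R u"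
  proof -
    have e: "b *\<^sub>R (z0 - z') - ((1-b)/L) *\<^sub>R u - (1-b) *\<^sub>R (z'-z) = (b *\<^sub>R z0 + (1-b) *\<^sub>R z - ((1-b)/L) *\<^sub>R u) - z'"
      by (simp add: algebra_simps)
    have "(1-b) *\<^sub>R ((b/(1-b)) *\<^sub>R (z0 - z') - (1/L) *\<^sub>R u) = b *\<^sub>R (z0 - z') - ((1-b)/L) *\<^sub>R u"
      using b by (simp add: scaleR_diff_right)
    also have "\<dots> = (1-b) *\<^sub>R (z' - z)" using e it by (metis diff_self eq_iff_diff_eq_0)
    finally have "(1-b) *\<^sub>R (z' - z) = (1-b) *\<^sub>R ((b/(1-b)) *\<^sub>R (z0 - z') - (1/L) *\<^sub>R u)" ..
    then show ?thesis using b by simp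
  qed
  have d2: "z' - z = b *\<^sub>R (z0 - z) - ((1-b)/L) *\<^sub>R u"
    unfolding it by (simp add: algebra_simps)
  have "inner (g' - g) (z' - z) = inner g' (z' - z) - inner g (z' - z)"
    by (simp add: inner_diff_left)
  also have "\<dots> = b/(1-b) * inner g' (z0 - z') - (1/L) * inner g' u
        - (b * inner g (z0 - z) - ((1-b)/L) * inner g u)"
  proof -
    have "inner g' (z' - z) = b/(1-b) * inner g' (z0 - z') - (1/L) * inner g' u"
      unfolding d1 by (simp add: inner_diff_right)
    moreover have "inner g (z' - z) = b * inner g (z0 - z) - ((1-b)/L) * inner g u"
      unfolding d2 by (simp add: inner_diff_right)
    ultimately show ?thesis by simp
  qed
  finally have c2: "b/(1-b) * inner g' (z0 - z') - (1/L) * inner g' u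
        - (b * inner g (z0 - z) - ((1-b)/L) * inner g u) - (1/L) * (norm (g' - g))\<^sup>2 \<ge> 0"
    using c by simp
  have w: "0 \<le> (norm (g' - 2 *\<^sub>R g + u))\<^sup>2" by simp
  have n1: "(norm (g' - g))\<^sup>2 = inner g' g' - 2 * inner g' g + inner g g"
    by (simp add: power2_norm_eq_inner inner_diff_left inner_diff_right inner_commute)
  have n2: "(norm (g - u))\<^sup>2 = inner g g - 2 * inner g u + inner u u"
    by (simp add: power2_norm_eq_inner inner_diff_left inner_diff_right inner_commute)
  have n3: "(norm (g' - 2 *\<^sub>R g + u))\<^sup>2 = inner g' g' + 4 * inner g g + inner u u
       - 4 * inner g' g + 2 * inner g' u - 4 * inner g u"
    by (simp add: power2_norm_eq_inner inner_diff_left inner_diff_right inner_add_left inner_add_right inner_commute)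
  have n4: "(norm g')\<^sup>2 = inner g' g'" "(norm g)\<^sup>2 = inner g g"
    by (simp_all add: power2_norm_eq_inner)
  have n5: "inner g (g - u) = inner g g - inner g u" by (simp add: inner_diff_right)
  have key: "((1 - 2 * b) / (2 * L) * inner g g - b * inner g (z0 - z) + b / L * (inner g g - inner g u)
        + 1 / (2 * L) * (inner g g - 2 * inner g u + inner u u))
       - (1 / (2 * L) * inner g' g' - b / (1 - b) * inner g' (z0 - z'))
     = (1/(2*L)) * (inner g' g' + 4 * inner g g + inner u u - 4 * inner g' g + 2 * inner g' u - 4 * inner g u)
       + (b/(1-b) * inner g' (z0 - z') - (1/L) * inner g' u - (b * inner g (z0 - z) - ((1-b)/L) * inner g u)
          - (1/L) * (inner g' g' - 2 * inner g' g + inner g g))"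
    using L b by (simp add: field_simps)
  have "0 \<le> (1/(2*L)) * (inner g' g' + 4 * inner g g + inner u u - 4 * inner g' g + 2 * inner g' u - 4 * inner g u)"
    using w n3 L by simp
  moreover have "0 \<le> b/(1-b) * inner g' (z0 - z') - (1/L) * inner g' u - (b * inner g (z0 - z) - ((1-b)/L) * inner g u)
          - (1/L) * (inner g' g' - 2 * inner g' g + inner g g)" using c2 unfolding n1 .
  ultimately have "0 \<le> ((1 - 2 * b) / (2 * L) * inner g g - b * inner g (z0 - z) + b / L * (inner g g - inner g u)
        + 1 / (2 * L) * (inner g g - 2 * inner g u + inner u u))
       - (1 / (2 * L) * inner g' g' - b / (1 - b) * inner g' (z0 - z'))" unfolding key by (rule add_nonneg_nonneg)
  then show ?thesis unfolding n2 n4 n5 g_def[symmetric] g'_def[symmetric] by simp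
qed

lemma al3a: assumes L: "L \<noteq> (0::real)" shows "(real k+1)*(real k+2) * (1 / (2 * L) * N1 - 1/(real k+1) * A)
     = real (Suc k) * (real (Suc k) + 1) / (2 * L) * N1 - (real (Suc k) + 1) * A"
proof -
  have a: "real k + 1 \<noteq> 0" by linarith
  have e1: "(real k+1)*(real k+2) * (1 / (2 * L) * N1) = real (Suc k) * (real (Suc k) + 1) / (2 * L) * N1"
    by (simp add: add.commute)
  have e2: "(real k+1)*(real k+2) * (1/(real k+1) * A) = (real (Suc k) + 1) * A"
    using a by (simp add: field_simps)
  show ?thesis unfolding right_diff_distrib e1 e2 ..
qed
lemma al3b: assumes L: "L \<noteq> (0::real)" shows "(real k+1)*(real k+2) * ((real k/(real k+2)) / (2 * L) * N0 - (1/(real k+2)) * C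
           + (1/(real k+2)) / L * I + 1 / (2 * L) * D)
     = real k * (real k + 1) / (2 * L) * N0 - (real k + 1) * C
         + ((real k + 1)/L * I + (real k+1)*(real k+2)/(2*L) * D)"
proof -
  have a: "real k + 2 \<noteq> 0" by linarith
  have b: "(real k+1)*(real k+2) * (real k/(real k+2)) = (real k+1)*real k" using a by simp
  have "(real k+1)*(real k+2) * ((real k/(real k+2)) / (2 * L) * N0) = ((real k+1)*(real k+2) * (real k/(real k+2))) * N0 / (2*L)"
    by simp
  also have "\<dots> = real k * (real k + 1) / (2 * L) * N0" unfolding b by (simp add: mult.commute)
  finally have "(real k+1)*(real k+2) * ((real k/(real k+2)) / (2 * L) * N0) = real k * (real k + 1) / (2 * L) * N0" .
  moreover have "(real k+1)*(real k+2) * ((1/(real k+2)) * C) = (real k + 1) * C" using a by (simp add: field_simps)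
  moreover have "(real k+1)*(real k+2) * ((1/(real k+2)) / L * I) = (real k + 1)/L * I"
  proof -
    have c: "(real k+1)*(real k+2) * (1/(real k+2)) = real k+1" using a by simp
    have "(real k+1)*(real k+2) * ((1/(real k+2)) / L * I) = ((real k+1)*(real k+2) * (1/(real k+2))) * I / L" by simp
    also have "\<dots> = (real k + 1)/L * I" unfolding c by simp
    finally show ?thesis .
  qed
  moreover have "(real k+1)*(real k+2) * (1 / (2 * L) * D) = (real k+1)*(real k+2)/(2*L) * D" by simp
  ultimately show ?thesis by (simp add: ring_distribs)
qed
lemma alg3:
  fixes L N1 A N0 C I D :: real and k :: nat
  assumes L: "L > 0"
    and S: "1 / (2 * L) * N1 - (1/(real k+2)) / (1 - 1/(real k+2)) * A
         \<le> (1 - 2 * (1/(real k+2))) / (2 * L) * N0 - (1/(real k+2)) * C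
           + (1/(real k+2)) / L * I + 1 / (2 * L) * D"
  shows "real (Suc k) * (real (Suc k) + 1) / (2 * L) * N1 - (real (Suc k) + 1) * A
      \<le> real k * (real k + 1) / (2 * L) * N0 - (real k + 1) * C
         + ((real k + 1)/L * I + (real k+1)*(real k+2)/(2*L) * D)"
proof -
  have p: "(real k+1)*(real k+2) > 0" by simp
  have r1: "(1/(real k+2)) / (1 - 1/(real k+2)) = 1/(real k+1)" by (simp add: field_simps)
  have r2: "1 - 2 * (1/(real k+2)) = real k/(real k+2)" by (simp add: field_simps)
  from mult_left_mono[OF S, of "(real k+1)*(real k+2)"] p
  have "(real k+1)*(real k+2) * (1 / (2 * L) * N1 - (1/(real k+2)) / (1 - 1/(real k+2)) * A)
         \<le> (real k+1)*(real k+2) * ((1 - 2 * (1/(real k+2))) / (2 * L) * N0 - (1/(real k+2)) * C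
           + (1/(real k+2)) / L * I + 1 / (2 * L) * D)" by simp
  moreover have "(real k+1)*(real k+2) * (1 / (2 * L) * N1 - (1/(real k+2)) / (1 - 1/(real k+2)) * A)
     = real (Suc k) * (real (Suc k) + 1) / (2 * L) * N1 - (real (Suc k) + 1) * A"
    using L unfolding r1 by (intro al3a) simp
  moreover have "(real k+1)*(real k+2) * ((1 - 2 * (1/(real k+2))) / (2 * L) * N0 - (1/(real k+2)) * C
           + (1/(real k+2)) / L * I + 1 / (2 * L) * D)
     = real k * (real k + 1) / (2 * L) * N0 - (real k + 1) * C
         + ((real k + 1)/L * I + (real k+1)*(real k+2)/(2*L) * D)"
    using L unfolding r2 by (intro al3b) simp
  ultimately show ?thesis by linarith
qed

theorem lemma15:
  fixes G :: "'a::euclidean_space \<Rightarrow> 'a"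
    and L :: real
    and \<beta> :: "nat \<Rightarrow> real"
    and z zt :: "nat \<Rightarrow> 'a"
  assumes L_pos: "L > 0"
    and coco: "cocoercive L G"
    and beta_range: "\<And>k. 0 < \<beta> k \<and> \<beta> k < 1"
    and iter: "\<And>k. z (Suc k) = \<beta> k *\<^sub>R z 0 + (1 - \<beta> k) *\<^sub>R z k - ((1 - \<beta> k) / L) *\<^sub>R zt k"
  shows "(\<forall>k. 1 / (2 * L) * (norm (G (z (Suc k))))\<^sup>2
               - \<beta> k / (1 - \<beta> k) * inner (G (z (Suc k))) (z 0 - z (Suc k))
             \<le> (1 - 2 * \<beta> k) / (2 * L) * (norm (G (z k)))\<^sup>2
               - \<beta> k * inner (G (z k)) (z 0 - z k)
               + \<beta> k / L * inner (G (z k)) (G (z k) - zt k)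
               + 1 / (2 * L) * (norm (G (z k) - zt k))\<^sup>2)
       \<and> ((\<forall>k. \<beta> k = 1 / (real k + 2)) \<longrightarrow>
            (\<forall>k. lyap L G z (Suc k)
                 \<le> lyap L G z k + 1 / (12 * L) * (norm (G (z k)))\<^sup>2
                   + 4 * (real k + 1)\<^sup>2 / L * (norm (G (z k) - zt k))\<^sup>2))"
proof -
  have P1: "\<And>k. 1 / (2 * L) * (norm (G (z (Suc k))))\<^sup>2
               - \<beta> k / (1 - \<beta> k) * inner (G (z (Suc k))) (z 0 - z (Suc k))
             \<le> (1 - 2 * \<beta> k) / (2 * L) * (norm (G (z k)))\<^sup>2
               - \<beta> k * inner (G (z k)) (z 0 - z k)
               + \<beta> k / L * inner (G (z k)) (G (z k) - zt k)
               + 1 / (2 * L) * (norm (G (z k) - zt k))\<^sup>2"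
    using step[OF L_pos coco] beta_range iter by blast
  show ?thesis
  proof (intro conjI allI impI P1)
    fix k
    assume b: "\<forall>k. \<beta> k = 1 / (real k + 2)"
    define g where "g = G (z k)"
    define d where "d = G (z k) - zt k"
    have S: "1 / (2 * L) * (norm (G (z (Suc k))))\<^sup>2 - (1/(real k+2)) / (1 - 1/(real k+2)) * inner (G (z (Suc k))) (z 0 - z (Suc k))
         \<le> (1 - 2 * (1/(real k+2))) / (2 * L) * (norm g)\<^sup>2 - (1/(real k+2)) * inner g (z 0 - z k)
           + (1/(real k+2)) / L * inner g d + 1 / (2 * L) * (norm d)\<^sup>2"
      using P1[of k] b unfolding g_def d_def by simp
    have Y0: "\<And>c. (norm (g - c *\<^sub>R d))\<^sup>2 = (norm g)\<^sup>2 - 2*c*inner g d + c^2*(norm d)\<^sup>2"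
    proof -
      fix c
      have "(norm (g - c *\<^sub>R d))\<^sup>2 = inner (g - c *\<^sub>R d) (g - c *\<^sub>R d)" by (rule power2_norm_eq_inner)
      also have "\<dots> = inner g g - 2*c*inner g d + c^2*inner d d"
        by (simp add: inner_diff_left inner_diff_right inner_commute power2_eq_square algebra_simps)
      finally show "(norm (g - c *\<^sub>R d))\<^sup>2 = (norm g)\<^sup>2 - 2*c*inner g d + c^2*(norm d)\<^sup>2"
        by (simp add: power2_norm_eq_inner)
    qed
    have Y: "(norm (g - (6*(real k+1)) *\<^sub>R d))\<^sup>2 = (norm g)\<^sup>2 - 12*(real k+1)*inner g d + 36*(real k+1)^2*(norm d)\<^sup>2"
      unfolding Y0 by (simp add: power2_eq_square algebra_simps)
    have Y2: "0 \<le> (norm g)\<^sup>2 - 12*(real k+1)*inner g d + 36*(real k+1)^2*(norm d)\<^sup>2"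
      using Y by (metis zero_le_power2)
    have A2: "(real k + 1)/L * inner g d + (real k+1)*(real k+2)/(2*L) * (norm d)\<^sup>2
       \<le> 1/(12*L)*(norm g)\<^sup>2 + 4*(real k+1)^2/L*(norm d)\<^sup>2"
      by (rule alg2[OF L_pos Y2]) simp
    have "lyap L G z (Suc k) \<le> real k * (real k + 1) / (2 * L) * (norm g)\<^sup>2 - (real k + 1) * inner g (z 0 - z k)
         + ((real k + 1)/L * inner g d + (real k+1)*(real k+2)/(2*L) * (norm d)\<^sup>2)"
      unfolding lyap_def by (rule alg3[OF L_pos S])
    also have "\<dots> \<le> lyap L G z k + (1/(12*L)*(norm g)\<^sup>2 + 4*(real k+1)^2/L*(norm d)\<^sup>2)"
      using A2 unfolding lyap_def g_def by simp
    finally show "lyap L G z (Suc k)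
                 \<le> lyap L G z k + 1 / (12 * L) * (norm (G (z k)))\<^sup>2
                   + 4 * (real k + 1)\<^sup>2 / L * (norm (G (z k) - zt k))\<^sup>2"
      unfolding g_def d_def by simp
  qed
qed

end
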